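(* Let $X$ be a Hausdorff topological space, $\Phi$ a local semiflow on $X$, and $\mathscr A$ an attractor of $\Phi$ with region of attraction $\Omega=\Omega(\mathscr A)$. Assume $\mathscr A$ is closed and has a $\mathcal K_0$ function $\zeta$ on $\Omega$. Then $\mathscr A$ has a Lyapunov function $L$ on $\Omega$. If in addition $X$ is normal, then for any closed subset $K$ of $X$ with $K\subset\Omega\setminus\mathscr A$, there exists a Lyapunov function $L$ of $\mathscr A$ such that $L(x)\ge1$ for all $x\in K$.
   Context: A local semiflow $\Phi$ on $X$ is a continuous map from an open subset $\mathcal D_\Phi\subset\mathbb R^+\times X$ to $X$ such that: (i) for each $x$ there is $T_x\in(0,\infty]$ with $(t,x)\in\mathcal D_\Phi$ iff $t\in[0,T_x)$; (ii) $\Phi(0,x)=x$; (iii) if $(t+s,x)\in\mathcal D_\Phi$ with $t,s\ge0$ then $\Phi(t+s,x)=\Phi(t,\Phi(s,x))$. Write $\Phi(t)x=\Phi(t,x)$, $\Phi(t)M=\{\Phi(t)x:x\in M,\ t<T_x\}$. Convention: $U$ is a neighborhood of $A$ if $\overline A\subset\mathrm{int}\,U$. A set $K$ is invariant if $\Phi(t)K\subset K$ and $K\subset\Phi(t)K$ for all $t\ge0$. $K$ attracts $B$ if $T_x=\infty$ for all $x\in B$ and for every neighborhood $V$ of $K$ there is $t_0>0$ with $\Phi(t)B\subset V$ for all $t>t_0$. A set is s-compact if every sequence in it has a subsequence converging to a point of the set. An attractor is a nonempty s-compact invariant set $\mathscr A$ for which there is a neighborhood $N$ of $\mathscr A$ such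 that $\mathscr A$ attracts $N$ and every s-compact invariant subset of $N$ is contained in $\mathscr A$; $\Omega(\mathscr A)=\{x:\mathscr A\text{ attracts }\{x\}\}$. A $\mathcal K_0$ function of $\mathscr A$ is a nonnegative continuous function $\zeta$ on $\Omega$ with $\zeta(x)=0\iff x\in\mathscr A$. A Lyapunov function of $\mathscr A$ is a $\mathcal K_0$ function $L$ of $\mathscr A$ with $L(\Phi(t)x)<L(x)$ for all $x\in\Omega\setminus\mathscr A$ and $t>0$. *)

theory Defs
  imports "HOL-Analysis.Analysis"
begin

definition local_semiflow :: "'a topology \<Rightarrow> (real \<times> 'a) set \<Rightarrow> (real \<Rightarrow> 'a \<Rightarrow> 'a) \<Rightarrow> bool" where
  "local_semiflow X D Phi \<longleftrightarrow>
     D \<subseteq> {0..} \<times> topspace X \<and>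
     openin (prod_topology (subtopology euclideanreal {0..}) X) D \<and>
     continuous_map (subtopology (prod_topology euclideanreal X) D) X (\<lambda>(t, x). Phi t x) \<and>
     (\<forall>x\<in>topspace X. (\<exists>T>0. {t. (t, x) \<in> D} = {0..<T}) \<or> {t. (t, x) \<in> D} = {0..}) \<and>
     (\<forall>x\<in>topspace X. Phi 0 x = x) \<and>
     (\<forall>x t s. 0 \<le> t \<and> 0 \<le> s \<and> (t + s, x) \<in> D \<longrightarrow>
        (t, Phi s x) \<in> D \<and> Phi (t + s) x = Phi t (Phi s x))"

definition flow_image :: "(real \<times> 'a) set \<Rightarrow> (real \<Rightarrow> 'a \<Rightarrow> 'a) \<Rightarrow> real \<Rightarrow> 'a set \<Rightarrow> 'a set" where
  "flow_image D Phi t M = {Phi t x | x. x \<in> M \<and> (t, x) \<in> D}"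

definition sf_invariant :: "(real \<times> 'a) set \<Rightarrow> (real \<Rightarrow> 'a \<Rightarrow> 'a) \<Rightarrow> 'a set \<Rightarrow> bool" where
  "sf_invariant D Phi K \<longleftrightarrow>
     (\<forall>t\<ge>0. flow_image D Phi t K \<subseteq> K \<and> K \<subseteq> flow_image D Phi t K)"

definition nbhd_of :: "'a topology \<Rightarrow> 'a set \<Rightarrow> 'a set \<Rightarrow> bool" where
  "nbhd_of X A U \<longleftrightarrow> U \<subseteq> topspace X \<and> X closure_of A \<subseteq> X interior_of U"

definition sf_attracts :: "'a topology \<Rightarrow> (real \<times> 'a) set \<Rightarrow> (real \<Rightarrow> 'a \<Rightarrow> 'a) \<Rightarrow> 'a set \<Rightarrow> 'a set \<Rightarrow> bool" where
  "sf_attracts X D Phi K B \<longleftrightarrow>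
     (\<forall>x\<in>B. \<forall>t\<ge>0. (t, x) \<in> D) \<and>
     (\<forall>V. nbhd_of X K V \<longrightarrow> (\<exists>t0>0. \<forall>t>t0. flow_image D Phi t B \<subseteq> V))"

definition s_compact :: "'a topology \<Rightarrow> 'a set \<Rightarrow> bool" where
  "s_compact X K \<longleftrightarrow>
     (\<forall>\<sigma>::nat \<Rightarrow> 'a. (\<forall>n. \<sigma> n \<in> K) \<longrightarrow>
        (\<exists>r y. strict_mono r \<and> y \<in> K \<and> limitin X (\<sigma> \<circ> r) y sequentially))"

definition is_attractor :: "'a topology \<Rightarrow> (real \<times> 'a) set \<Rightarrow> (real \<Rightarrow> 'a \<Rightarrow> 'a) \<Rightarrow> 'a set \<Rightarrow> bool" where
  "is_attractor X D Phi A \<longleftrightarrow>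
     A \<noteq> {} \<and> A \<subseteq> topspace X \<and> s_compact X A \<and> sf_invariant D Phi A \<and>
     (\<exists>N. nbhd_of X A N \<and> sf_attracts X D Phi A N \<and>
        (\<forall>K. K \<subseteq> N \<and> s_compact X K \<and> sf_invariant D Phi K \<longrightarrow> K \<subseteq> A))"

definition attr_region :: "'a topology \<Rightarrow> (real \<times> 'a) set \<Rightarrow> (real \<Rightarrow> 'a \<Rightarrow> 'a) \<Rightarrow> 'a set \<Rightarrow> 'a set" where
  "attr_region X D Phi A = {x \<in> topspace X. sf_attracts X D Phi A {x}}"

definition K0_function :: "'a topology \<Rightarrow> (real \<times> 'a) set \<Rightarrow> (real \<Rightarrow> 'a \<Rightarrow> 'a) \<Rightarrow> 'a set \<Rightarrow> ('a \<Rightarrow> real) \<Rightarrow> bool" where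
  "K0_function X D Phi A \<zeta> \<longleftrightarrow>
     continuous_map (subtopology X (attr_region X D Phi A)) euclideanreal \<zeta> \<and>
     (\<forall>x\<in>attr_region X D Phi A. 0 \<le> \<zeta> x \<and> (\<zeta> x = 0 \<longleftrightarrow> x \<in> A))"

definition Lyapunov_function :: "'a topology \<Rightarrow> (real \<times> 'a) set \<Rightarrow> (real \<Rightarrow> 'a \<Rightarrow> 'a) \<Rightarrow> 'a set \<Rightarrow> ('a \<Rightarrow> real) \<Rightarrow> bool" where
  "Lyapunov_function X D Phi A L \<longleftrightarrow>
     K0_function X D Phi A L \<and>
     (\<forall>x\<in>attr_region X D Phi A - A. \<forall>t>0. L (Phi t x) < L x)"

end

theory Submission
  imports Defs
begin

lemma cont_real_crit:
  fixes f :: "'a \<Rightarrow> real"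
  assumes "\<And>x e. x \<in> topspace Y \<Longrightarrow> e > 0 \<Longrightarrow> \<exists>W. openin Y W \<and> x \<in> W \<and> (\<forall>y\<in>W. \<bar>f y - f x\<bar> < e)"
  shows "continuous_map Y euclideanreal f"
proof -
  have "continuous_map Y Met_TC.mtopology f"
    unfolding Met_TC.continuous_map_to_metric
    using assms by (fastforce simp: dist_real_def abs_minus_commute)
  then show ?thesis by simp
qed

definition kf :: "real \<Rightarrow> real" where "kf t = 2 - 1 / (1 + t)"

definition LyapL :: "(real \<Rightarrow> 'a \<Rightarrow> 'a) \<Rightarrow> ('a \<Rightarrow> real) \<Rightarrow> 'a \<Rightarrow> real" where
  "LyapL Phi z y = (SUP t\<in>{0..}. kf t * z (Phi t y))"

lemma kf_bounds: "0 \<le> t \<Longrightarrow> 1 \<le> kf t \<and> kf t \<le> 2"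
  by (simp add: kf_def)

lemma kf0: "kf 0 = 1" by (simp add: kf_def)

lemma kf_shift:
  assumes "0 \<le> t" "0 < s" "t + s \<le> T"
  shows "kf t \<le> (1 - s / (2 * (1 + T + s)^2)) * kf (t + s)"
proof -
  have d: "kf (t + s) - kf t = s / ((1 + t) * (1 + t + s))"
    using assms by (simp add: kf_def field_simps)
  have p: "(1 + t) * (1 + t + s) \<le> (1 + T + s)^2"
    using assms by (simp add: power2_eq_square mult_mono)
  have "s / (1 + T + s)^2 \<le> s / ((1 + t) * (1 + t + s))"
    using assms p by (intro divide_left_mono) auto
  moreover have "kf (t + s) * (s / (2 * (1 + T + s)^2)) \<le> s / (1 + T + s)^2"
  proof -
    have "kf (t + s) \<le> 2" using kf_bounds assms by auto
    moreover have "0 \<le> s / (2 * (1 + T + s)^2)" using assms by auto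
    ultimately have "kf (t + s) * (s / (2 * (1 + T + s)^2)) \<le> 2 * (s / (2 * (1 + T + s)^2))"
      by (intro mult_right_mono) auto
    then show ?thesis by simp
  qed
  moreover have "s / (2 * (1 + T + s)^2) = (s / (1 + T + s)^2) / 2" by simp
  ultimately show ?thesis using d
    by (smt (verit, best) right_diff_distrib mult.commute mult_cancel_right1)
qed


context
  fixes X :: "'a topology" and D :: "(real \<times> 'a) set" and Phi :: "real \<Rightarrow> 'a \<Rightarrow> 'a"
    and A :: "'a set" and z :: "'a \<Rightarrow> real" and N :: "'a set"
  assumes sf: "local_semiflow X D Phi"
    and cl: "closedin X A"
    and K0: "K0_function X D Phi A z"
    and AN: "nbhd_of X A N"
    and attN: "sf_attracts X D Phi A N"
    and inv: "sf_invariant D Phi A"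
    and Atop: "A \<subseteq> topspace X"
begin

abbreviation "Om \<equiv> attr_region X D Phi A"

lemma Om_D: "x \<in> Om \<Longrightarrow> 0 \<le> t \<Longrightarrow> (t,x) \<in> D"
  by (auto simp: attr_region_def sf_attracts_def)

lemma Om_top: "Om \<subseteq> topspace X" by (auto simp: attr_region_def)

lemma Phi_top: "(t,x) \<in> D \<Longrightarrow> Phi t x \<in> topspace X"
proof -
  assume a: "(t,x) \<in> D"
  have c: "continuous_map (subtopology (prod_topology euclideanreal X) D) X (\<lambda>(t, x). Phi t x)"
    and Dsub: "D \<subseteq> {0..} \<times> topspace X"
    using sf by (auto simp: local_semiflow_def)
  have "(t,x) \<in> topspace (subtopology (prod_topology euclideanreal X) D)"
    using a Dsub by auto
  then show ?thesis using continuous_map_image_subset_topspace[OF c] by force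
qed

lemma Om_semi: "x \<in> Om \<Longrightarrow> 0 \<le> t \<Longrightarrow> 0 \<le> s \<Longrightarrow> Phi s (Phi t x) = Phi (s+t) x \<and> (s, Phi t x) \<in> D"
proof -
  assume a: "x \<in> Om" "0 \<le> t" "0 \<le> s"
  then have "(s + t, x) \<in> D" using Om_D by auto
  then show ?thesis using sf a unfolding local_semiflow_def by metis
qed

lemma flow_image_single: "(t,x) \<in> D \<Longrightarrow> flow_image D Phi t {x} = {Phi t x}"
  by (auto simp: flow_image_def)

lemma Om_forward: assumes x: "x \<in> Om" and t: "0 \<le> t" shows "Phi t x \<in> Om"
proof -
  have tx: "Phi t x \<in> topspace X" using Phi_top Om_D x t by blast
  have D1: "\<forall>s\<ge>0. (s, Phi t x) \<in> D" using Om_semi x t by blast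
  have "\<exists>t0>0. \<forall>s>t0. flow_image D Phi s {Phi t x} \<subseteq> V" if V: "nbhd_of X A V" for V
  proof -
    obtain t0 where t0: "t0 > 0" "\<forall>s>t0. flow_image D Phi s {x} \<subseteq> V"
      using x V by (auto simp: attr_region_def sf_attracts_def)
    show ?thesis
    proof (intro exI conjI allI impI)
      fix s assume s: "s > t0"
      have "flow_image D Phi s {Phi t x} = {Phi (s+t) x}"
        using flow_image_single D1 Om_semi x t s t0 by auto
      also have "\<dots> = flow_image D Phi (s+t) {x}"
        using flow_image_single Om_D x t s t0 by auto
      also have "\<dots> \<subseteq> V" using t0 s t by auto
      finally show "flow_image D Phi s {Phi t x} \<subseteq> V" .
    qed (use t0 in auto)
  qed
  then show ?thesis using tx D1 by (auto simp: attr_region_def sf_attracts_def)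
qed

lemma z_cont: "continuous_map (subtopology X Om) euclideanreal z"
  using K0 by (simp add: K0_function_def)

lemma z_nonneg: "y \<in> Om \<Longrightarrow> 0 \<le> z y"
  using K0 by (simp add: K0_function_def)

lemma z_zero: "y \<in> Om \<Longrightarrow> z y = 0 \<longleftrightarrow> y \<in> A"
  using K0 by (simp add: K0_function_def)

lemma cont_Phi_X:
  assumes "S \<subseteq> {0..}"
  shows "continuous_map (prod_topology (top_of_set S) (subtopology X Om)) X (\<lambda>w. Phi (fst w) (snd w))"
proof -
  have c: "continuous_map (subtopology (prod_topology euclideanreal X) D) X (\<lambda>(t, x). Phi t x)"
    using sf by (auto simp: local_semiflow_def)
  have "S \<times> Om \<subseteq> D" using assms Om_D by auto
  then have "continuous_map (subtopology (prod_topology euclideanreal X) (S \<times> Om)) X (\<lambda>(t, x). Phi t x)"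
    using continuous_map_from_subtopology_mono c by blast
  then show ?thesis by (simp add: subtopology_Times case_prod_unfold)
qed

lemma cont_Phi_Om:
  assumes "S \<subseteq> {0..}"
  shows "continuous_map (prod_topology (top_of_set S) (subtopology X Om)) (subtopology X Om) (\<lambda>w. Phi (fst w) (snd w))"
proof -
  have "Phi (fst w) (snd w) \<in> Om" if "w \<in> topspace (prod_topology (top_of_set S) (subtopology X Om))" for w
    using that assms Om_forward by auto
  then show ?thesis using cont_Phi_X[OF assms] by (auto simp: continuous_map_in_subtopology)
qed

lemma cont_F:
  assumes "S \<subseteq> {0..}"
  shows "continuous_map (prod_topology (top_of_set S) (subtopology X Om)) euclideanreal (\<lambda>w. z (Phi (fst w) (snd w)))"
  using continuous_map_compose[OF cont_Phi_Om[OF assms] z_cont] by (simp add: o_def)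


abbreviation "UN0 \<equiv> X interior_of N"

lemma A_U: "A \<subseteq> UN0"
  using closure_of_subset[OF Atop] AN by (auto simp: nbhd_of_def)

lemma N_Om: "N \<subseteq> Om"
proof
  fix y assume y: "y \<in> N"
  have "y \<in> topspace X" using AN y by (auto simp: nbhd_of_def)
  moreover have "\<forall>t\<ge>0. (t, y) \<in> D" using attN y by (auto simp: sf_attracts_def)
  moreover have "\<exists>t0>0. \<forall>t>t0. flow_image D Phi t {y} \<subseteq> V" if V: "nbhd_of X A V" for V
  proof -
    obtain t0 where "t0 > 0" "\<forall>t>t0. flow_image D Phi t N \<subseteq> V"
      using attN V unfolding sf_attracts_def by blast
    moreover have "flow_image D Phi t {y} \<subseteq> flow_image D Phi t N" for t
      using y by (auto simp: flow_image_def)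
    ultimately show ?thesis by blast
  qed
  ultimately show "y \<in> Om" by (auto simp: attr_region_def sf_attracts_def)
qed

lemma U_N: "UN0 \<subseteq> N" by (rule interior_of_subset)

lemma A_Om: "A \<subseteq> Om" using A_U U_N N_Om by blast

lemma nbhd_open: "openin X V \<Longrightarrow> A \<subseteq> V \<Longrightarrow> nbhd_of X A V"
  using cl closure_of_eq[of X A] by (simp add: nbhd_of_def openin_subset interior_of_openin)

lemma unif_tail:
  assumes e: "e > 0"
  shows "\<exists>T>0. \<forall>y\<in>N. \<forall>t>T. z (Phi t y) < e"
proof -
  have tsp: "topspace (subtopology X Om) = Om" using Om_top by auto
  have "openin (subtopology X Om) {y \<in> topspace (subtopology X Om). z y \<in> {..<e}}"
    by (rule openin_continuous_map_preimage[OF z_cont]) auto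
  then obtain Op where Op0: "openin X Op" "{y \<in> topspace (subtopology X Om). z y \<in> {..<e}} = Op \<inter> Om"
    unfolding openin_subtopology by blast
  have eqS: "{y \<in> topspace (subtopology X Om). z y \<in> {..<e}} = {y \<in> Om. z y < e}" using tsp by (simp only:) simp
  have Op: "openin X Op" "{y \<in> Om. z y < e} = Op \<inter> Om" using Op0(1) apply assumption
    using Op0(2) unfolding eqS .
  define V where "V = UN0 \<inter> Op"
  have "openin X V" using Op by (auto simp: V_def)
  moreover have "A \<subseteq> V"
  proof
    fix a assume a: "a \<in> A"
    then have "a \<in> Om" "z a = 0" using A_Om z_zero by auto
    then have "a \<in> {y \<in> Om. z y < e}" using e by simp
    then have "a \<in> Op \<inter> Om" unfolding Op(2) .
    then show "a \<in> V" using A_U a unfolding V_def by blast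
  qed
  ultimately have "nbhd_of X A V" by (rule nbhd_open)
  then obtain t0 where t0: "t0 > 0" "\<forall>t>t0. flow_image D Phi t N \<subseteq> V"
    using attN unfolding sf_attracts_def by blast
  have "z (Phi t y) < e" if y: "y \<in> N" and t: "t > t0" for y t
  proof -
    have "(t, y) \<in> D" using attN y t t0 unfolding sf_attracts_def by (meson less_imp_le order_less_trans)
    then have "Phi t y \<in> flow_image D Phi t N" unfolding flow_image_def using y by blast
    then have "Phi t y \<in> V" using t0(2) t by blast
    moreover have "Phi t y \<in> Om" using Om_forward N_Om y t t0 by auto
    ultimately have "Phi t y \<in> Op \<inter> Om" unfolding V_def by blast
    then have "Phi t y \<in> {y \<in> Om. z y < e}" unfolding Op(2) .
    then show ?thesis by simp
  qed
  then show ?thesis using t0 by blast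
qed

lemma tail:
  assumes x: "x \<in> Om" and e: "e > 0"
  shows "\<exists>\<tau> T'. 0 \<le> \<tau> \<and> \<tau> \<le> T' \<and> Phi \<tau> x \<in> UN0 \<and>
     (\<forall>y\<in>Om. Phi \<tau> y \<in> N \<longrightarrow> (\<forall>t>T'. z (Phi t y) < e))"
proof -
  have "nbhd_of X A UN0" using A_U by (intro nbhd_open) auto
  then obtain t0 where t0: "t0 > 0" "\<forall>s>t0. flow_image D Phi s {x} \<subseteq> UN0"
    using x by (auto simp: attr_region_def sf_attracts_def)
  define \<tau> where "\<tau> = t0 + 1"
  have "Phi \<tau> x \<in> UN0" using t0 flow_image_single[OF Om_D[OF x]] \<tau>_def by force
  obtain T where T: "T > 0" "\<forall>y\<in>N. \<forall>t>T. z (Phi t y) < e" using unif_tail e by blast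
  have "z (Phi t y) < e" if y: "y \<in> Om" "Phi \<tau> y \<in> N" and t: "t > \<tau> + T" for y t
  proof -
    have "Phi (t - \<tau>) (Phi \<tau> y) = Phi t y"
      using Om_semi[OF y(1), of \<tau> "t - \<tau>"] t T t0 \<tau>_def by auto
    moreover have "z (Phi (t - \<tau>) (Phi \<tau> y)) < e" using T y t by auto
    ultimately show ?thesis by simp
  qed
  then show ?thesis using \<open>Phi \<tau> x \<in> UN0\<close> t0 T \<tau>_def
    by (intro exI[of _ \<tau>] exI[of _ "\<tau> + T"]) auto
qed

lemma cont_slice:
  assumes y: "y \<in> Om" and S: "S \<subseteq> {0..}"
  shows "continuous_on S (\<lambda>t. z (Phi t y))"
proof -
  have "continuous_map (top_of_set S) (prod_topology (top_of_set S) (subtopology X Om)) (\<lambda>t. (t, y))"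
    using y Om_top by (intro continuous_map_pairedI) (auto simp: topspace_subtopology_subset)
  from continuous_map_compose[OF this cont_F[OF S]] show ?thesis by (simp add: o_def)
qed

lemma bdd:
  assumes y: "y \<in> Om"
  shows "bdd_above ((\<lambda>t. kf t * z (Phi t y)) ` {0..})"
proof -
  obtain \<tau> T' where tt: "0 \<le> \<tau>" "\<tau> \<le> T'" "Phi \<tau> y \<in> UN0"
     "\<forall>y'\<in>Om. Phi \<tau> y' \<in> N \<longrightarrow> (\<forall>t>T'. z (Phi t y') < 1)"
    using tail[OF y, of 1] by auto
  have tl: "\<forall>t>T'. z (Phi t y) < 1" using tt y U_N by blast
  have "compact ((\<lambda>t. z (Phi t y)) ` {0..T'})"
    using cont_slice[OF y, of "{0..T'}"] by (intro compact_continuous_image) auto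
  then obtain B where B: "\<forall>t\<in>{0..T'}. norm (z (Phi t y)) \<le> B"
    using compact_imp_bounded bounded_iff by (metis (no_types, lifting) image_eqI)
  have bnd: "kf t * z (Phi t y) \<le> 2 * max B 1" if t: "t \<ge> 0" for t
  proof -
    have z0: "0 \<le> z (Phi t y)" using z_nonneg Om_forward y t by auto
    have "z (Phi t y) \<le> max B 1"
    proof (cases "t \<le> T'")
      case True then show ?thesis using B t by force
    next
      case False then show ?thesis using tl by (smt (verit))
    qed
    then show ?thesis using kf_bounds[OF t] z0 by (intro mult_mono) auto
  qed
  show ?thesis
  proof (rule bdd_aboveI2)
    fix t :: real assume "t \<in> {0..}"
    then show "kf t * z (Phi t y) \<le> 2 * max B 1" using bnd by simp
  qed
qed

lemma L_ge: "y \<in> Om \<Longrightarrow> 0 \<le> t \<Longrightarrow> kf t * z (Phi t y) \<le> LyapL Phi z y"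
proof -
  assume y: "y \<in> Om" and t: "0 \<le> t"
  show ?thesis unfolding LyapL_def using bdd[OF y] t by (intro cSUP_upper) simp_all
qed

lemma L_le: "(\<And>t. 0 \<le> t \<Longrightarrow> kf t * z (Phi t y) \<le> c) \<Longrightarrow> LyapL Phi z y \<le> c"
proof -
  assume h: "\<And>t. 0 \<le> t \<Longrightarrow> kf t * z (Phi t y) \<le> c"
  have ne: "{0::real..} \<noteq> {}" by auto
  show ?thesis unfolding LyapL_def using h by (intro cSUP_least[OF ne]) simp
qed

lemma L_ge_z: "y \<in> Om \<Longrightarrow> z y \<le> LyapL Phi z y"
proof -
  assume y: "y \<in> Om"
  have "Phi 0 y = y" using sf y Om_top unfolding local_semiflow_def by blast
  then show ?thesis using L_ge[OF y, of 0] kf0 by simp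
qed


lemma L_nonneg: "y \<in> Om \<Longrightarrow> 0 \<le> LyapL Phi z y"
  using L_ge_z z_nonneg by (meson order_trans)

lemma cmp_bound:
  assumes u: "u \<in> Om" and v: "v \<in> Om" and t: "0 \<le> t" and e: "e > 0"
    and near: "t \<le> T' \<Longrightarrow> \<bar>z (Phi t u) - z (Phi t v)\<bar> < e"
    and far: "T' < t \<Longrightarrow> z (Phi t u) < e"
  shows "kf t * z (Phi t u) \<le> LyapL Phi z v + 2 * e"
proof -
  have k: "1 \<le> kf t" "kf t \<le> 2" using kf_bounds[OF t] by auto
  have zu: "0 \<le> z (Phi t u)" using z_nonneg Om_forward u t by blast
  have Lv: "0 \<le> LyapL Phi z v" by (rule L_nonneg[OF v])
  show ?thesis
  proof (cases "t \<le> T'")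
    case True
    then have "z (Phi t u) \<le> z (Phi t v) + e" using near by linarith
    then have "kf t * z (Phi t u) \<le> kf t * (z (Phi t v) + e)"
      using k by (intro mult_left_mono) auto
    also have "\<dots> = kf t * z (Phi t v) + kf t * e" by (simp add: algebra_simps)
    also have "\<dots> \<le> LyapL Phi z v + 2 * e"
      using L_ge[OF v t] k e by (intro add_mono) (auto intro: mult_right_mono)
    finally show ?thesis .
  next
    case False
    then have "z (Phi t u) < e" using far by simp
    then have "kf t * z (Phi t u) \<le> 2 * e" using k zu by (intro mult_mono) auto
    then show ?thesis using Lv by linarith
  qed
qed

lemma L_cont: "continuous_map (subtopology X Om) euclideanreal (LyapL Phi z)"
proof (rule cont_real_crit)
  fix x and \<epsilon> :: real
  assume x: "x \<in> topspace (subtopology X Om)" and ep: "\<epsilon> > 0"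
  have xO: "x \<in> Om" using x by simp
  define e where "e = \<epsilon> / 4"
  have e: "e > 0" using ep by (simp add: e_def)
  obtain \<tau> T' where tt: "0 \<le> \<tau>" "\<tau> \<le> T'" "Phi \<tau> x \<in> UN0"
     and tl: "\<forall>y\<in>Om. Phi \<tau> y \<in> N \<longrightarrow> (\<forall>t>T'. z (Phi t y) < e)"
    using tail[OF xO e] by blast
  let ?Y = "subtopology X Om"
  define P where "P = prod_topology (top_of_set {0..T'}) ?Y"
  have sub: "{0..T'} \<subseteq> {0::real..}" by auto
  have cF: "continuous_map P euclideanreal (\<lambda>w. z (Phi (fst w) (snd w)))"
    using cont_F[OF sub] unfolding P_def .
  have cFx: "continuous_map P euclideanreal (\<lambda>w. z (Phi (fst w) x))"
  proof -
    have "continuous_map P P (\<lambda>w. (fst w, x))"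
      unfolding P_def using x by (intro continuous_map_pairedI continuous_map_fst) simp
    from continuous_map_compose[OF this cF] show ?thesis by (simp add: o_def)
  qed
  have cD: "continuous_map P euclideanreal (\<lambda>w. \<bar>z (Phi (fst w) (snd w)) - z (Phi (fst w) x)\<bar>)"
    using cF cFx by (intro continuous_map_real_abs continuous_map_diff)
  define C where "C = {w \<in> topspace P. \<bar>z (Phi (fst w) (snd w)) - z (Phi (fst w) x)\<bar> \<in> {e..}}"
  have "closedin P C" unfolding C_def
    by (rule closedin_continuous_map_preimage[OF cD]) (simp add: closed_closedin[symmetric])
  have cs: "compact_space (top_of_set {0..T'})" by (rule compact_space_subtopology) simp
  have cC: "closedin ?Y (snd ` C)"
    using closed_map_snd[OF cs, of ?Y] \<open>closedin P C\<close> unfolding closed_map_def P_def by blast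
  have cPt: "continuous_map ?Y X (\<lambda>y. Phi \<tau> y)"
  proof -
    have "continuous_map ?Y (prod_topology (top_of_set {\<tau>}) ?Y) (\<lambda>y. (\<tau>, y))"
      by (intro continuous_map_pairedI) simp_all
    moreover have "{\<tau>} \<subseteq> {0..}" using tt by simp
    ultimately show ?thesis using continuous_map_compose[OF _ cont_Phi_X] by (fastforce simp: o_def)
  qed
  define W1 where "W1 = {y \<in> topspace ?Y. Phi \<tau> y \<in> UN0}"
  have oW1: "openin ?Y W1" unfolding W1_def
    by (rule openin_continuous_map_preimage[OF cPt]) simp
  define W where "W = W1 \<inter> (topspace ?Y - snd ` C)"
  have oW: "openin ?Y W" unfolding W_def
    by (rule openin_Int[OF oW1 openin_diff[OF openin_topspace cC]])
  have xC: "x \<notin> snd ` C"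
  proof
    assume "x \<in> snd ` C"
    then obtain w where w: "w \<in> C" "x = snd w" by blast
    then have "e \<le> \<bar>z (Phi (fst w) (snd w)) - z (Phi (fst w) x)\<bar>" unfolding C_def by simp
    then show False using w(2) e by simp
  qed
  have xW: "x \<in> W" unfolding W_def W1_def using x tt(3) xC by blast
  have tlx: "\<forall>t>T'. z (Phi t x) < e" using tl xO tt(3) U_N by blast
  have Lx: "0 \<le> LyapL Phi z x" by (rule L_nonneg[OF xO])
  show "\<exists>W. openin ?Y W \<and> x \<in> W \<and> (\<forall>y\<in>W. \<bar>LyapL Phi z y - LyapL Phi z x\<bar> < \<epsilon>)"
  proof (intro exI conjI ballI)
    show "openin ?Y W" by (rule oW)
    show "x \<in> W" by (rule xW)
    fix y assume yW: "y \<in> W"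
    have yO: "y \<in> Om" using yW unfolding W_def W1_def by simp
    have yU: "Phi \<tau> y \<in> N" using yW U_N unfolding W_def W1_def by blast
    have tly: "\<forall>t>T'. z (Phi t y) < e" using tl yO yU by blast
    have near: "\<bar>z (Phi t y) - z (Phi t x)\<bar> < e" if t: "0 \<le> t" "t \<le> T'" for t
    proof (rule ccontr)
      assume "\<not> ?thesis"
      then have "(t, y) \<in> C" unfolding C_def P_def using t yO Om_top by auto
      then have "y \<in> snd ` C" by force
      then show False using yW unfolding W_def by blast
    qed
    have "LyapL Phi z y \<le> LyapL Phi z x + 2 * e"
    proof (rule L_le)
      fix t :: real assume t: "0 \<le> t"
      show "kf t * z (Phi t y) \<le> LyapL Phi z x + 2 * e"
        by (rule cmp_bound[OF yO xO t e, of T']) (use near t tly in auto)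
    qed
    moreover have "LyapL Phi z x \<le> LyapL Phi z y + 2 * e"
    proof (rule L_le)
      fix t :: real assume t: "0 \<le> t"
      show "kf t * z (Phi t x) \<le> LyapL Phi z y + 2 * e"
        by (rule cmp_bound[OF xO yO t e, of T']) (use near t tlx in \<open>auto simp: abs_minus_commute\<close>)
    qed
    ultimately show "\<bar>LyapL Phi z y - LyapL Phi z x\<bar> < \<epsilon>" using e_def ep by linarith
  qed
qed

lemma L_strict:
  assumes x: "x \<in> Om" and xA: "x \<notin> A" and s: "0 < s"
  shows "LyapL Phi z (Phi s x) < LyapL Phi z x"
proof -
  define c where "c = z x"
  have c: "0 < c" using z_nonneg[OF x] z_zero[OF x] xA unfolding c_def by linarith
  have Lc: "c \<le> LyapL Phi z x" using L_ge_z[OF x] c_def by simp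
  obtain \<tau> T' where tt: "0 \<le> \<tau>" "\<tau> \<le> T'" "Phi \<tau> x \<in> UN0"
     and tl: "\<forall>y\<in>Om. Phi \<tau> y \<in> N \<longrightarrow> (\<forall>t>T'. z (Phi t y) < c / 4)"
    using tail[OF x, of "c/4"] c by auto
  have tlx: "\<forall>t>T'. z (Phi t x) < c / 4" using tl x tt(3) U_N by blast
  define q where "q = 1 - s / (2 * (1 + T' + s)^2)"
  have qpos: "0 \<le> q"
  proof -
    have "s \<le> (1 + T' + s)" using tt by simp
    also have "\<dots> \<le> (1 + T' + s)^2" using tt s by (simp add: power2_eq_square)
    finally have "s / (2 * (1 + T' + s)^2) \<le> 1"
      using s by (simp add: divide_le_eq)
    then show ?thesis unfolding q_def by simp
  qed
  have "0 < s / (2 * (1 + T' + s)^2)" using s tt by (intro divide_pos_pos) auto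
  then have q1: "q < 1" unfolding q_def by simp
  have "LyapL Phi z (Phi s x) \<le> max (c / 2) (q * LyapL Phi z x)"
  proof (rule L_le)
    fix t :: real assume t: "0 \<le> t"
    have eq: "Phi t (Phi s x) = Phi (t + s) x" using Om_semi[OF x, of s t] s t by simp
    have ts: "0 \<le> t + s" using t s by simp
    have zz: "0 \<le> z (Phi (t + s) x)" using z_nonneg Om_forward x ts by blast
    have k: "1 \<le> kf t" "kf t \<le> 2" using kf_bounds[OF t] by auto
    show "kf t * z (Phi t (Phi s x)) \<le> max (c / 2) (q * LyapL Phi z x)"
    proof (cases "t + s \<le> T'")
      case True
      have "kf t * z (Phi (t + s) x) \<le> (q * kf (t + s)) * z (Phi (t + s) x)"
        using kf_shift[OF t s True] zz unfolding q_def by (intro mult_right_mono) auto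
      also have "\<dots> = q * (kf (t + s) * z (Phi (t + s) x))" by simp
      also have "\<dots> \<le> q * LyapL Phi z x"
        using L_ge[OF x ts] qpos by (intro mult_left_mono) auto
      finally show ?thesis using eq by simp
    next
      case False
      then have "z (Phi (t + s) x) < c / 4" using tlx by simp
      then have "kf t * z (Phi (t + s) x) \<le> 2 * (c / 4)" using k zz by (intro mult_mono) auto
      then show ?thesis using eq by simp
    qed
  qed
  moreover have "c / 2 < LyapL Phi z x" using c Lc by linarith
  moreover have "q * LyapL Phi z x < LyapL Phi z x" using q1 c Lc by simp
  ultimately show ?thesis by linarith
qed

lemma L_zero_A: "x \<in> A \<Longrightarrow> LyapL Phi z x = 0"
proof -
  assume xA: "x \<in> A"
  have xO: "x \<in> Om" using xA A_Om by blast
  have "LyapL Phi z x \<le> 0"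
  proof (rule L_le)
    fix t :: real assume t: "0 \<le> t"
    have "(t, x) \<in> D" using Om_D[OF xO t] .
    then have "Phi t x \<in> flow_image D Phi t A" unfolding flow_image_def using xA by blast
    then have "Phi t x \<in> A" using inv t unfolding sf_invariant_def by blast
    then have "z (Phi t x) = 0" using z_zero A_Om by blast
    then show "kf t * z (Phi t x) \<le> 0" by simp
  qed
  then show ?thesis using L_nonneg[OF xO] by linarith
qed

lemma main_lyap: "Lyapunov_function X D Phi A (LyapL Phi z)"
  unfolding Lyapunov_function_def K0_function_def
proof (intro conjI ballI allI impI)
  show "continuous_map (subtopology X Om) euclideanreal (LyapL Phi z)" by (rule L_cont)
next
  fix x assume "x \<in> Om" then show "0 \<le> LyapL Phi z x" by (rule L_nonneg)
next
  fix x assume x: "x \<in> Om"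
  show "LyapL Phi z x = 0 \<longleftrightarrow> x \<in> A"
  proof
    assume "LyapL Phi z x = 0"
    then have "z x \<le> 0" using L_ge_z[OF x] by simp
    then have "z x = 0" using z_nonneg[OF x] by simp
    then show "x \<in> A" using z_zero[OF x] by simp
  qed (rule L_zero_A)
next
  fix x and t :: real assume x: "x \<in> Om - A" and t: "0 < t"
  then show "LyapL Phi z (Phi t x) < LyapL Phi z x" using L_strict by blast
qed
end


lemma gen_lyap:
  assumes sf: "local_semiflow X D Phi" and att: "is_attractor X D Phi A"
    and cl: "closedin X A" and K0: "K0_function X D Phi A z"
  shows "Lyapunov_function X D Phi A (LyapL Phi z) \<and>
         (\<forall>x\<in>attr_region X D Phi A. z x \<le> LyapL Phi z x)"
proof -
  obtain N where AN: "nbhd_of X A N" and attN: "sf_attracts X D Phi A N"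
    and inv: "sf_invariant D Phi A" and Atop: "A \<subseteq> topspace X"
    using att unfolding is_attractor_def by blast
  show ?thesis
    using main_lyap[OF sf cl K0 AN attN inv Atop] L_ge_z[OF sf cl K0 AN attN inv Atop] by blast
qed

theorem theorem5p3:
  fixes X :: "'a topology" and D :: "(real \<times> 'a) set" and Phi :: "real \<Rightarrow> 'a \<Rightarrow> 'a"
    and A :: "'a set" and \<zeta> :: "'a \<Rightarrow> real"
  assumes "Hausdorff_space X"
    and "local_semiflow X D Phi"
    and "is_attractor X D Phi A"
    and "closedin X A"
    and "K0_function X D Phi A \<zeta>"
  shows "(\<exists>L. Lyapunov_function X D Phi A L) \<and>
         (normal_space X \<longrightarrow>
            (\<forall>K. closedin X K \<and> K \<subseteq> attr_region X D Phi A - A \<longrightarrow>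
               (\<exists>L. Lyapunov_function X D Phi A L \<and> (\<forall>x\<in>K. 1 \<le> L x))))"
proof (intro conjI impI allI)
  show "\<exists>L. Lyapunov_function X D Phi A L"
    using gen_lyap[OF assms(2-5)] by blast
next
  fix K assume nX: "normal_space X" and K: "closedin X K \<and> K \<subseteq> attr_region X D Phi A - A"
  let ?Om = "attr_region X D Phi A"
  have dj: "disjnt A K" using K by (auto simp: disjnt_def)
  obtain f :: "'a \<Rightarrow> real" where f: "continuous_map X (top_of_set {0..1}) f" "f ` A \<subseteq> {0}" "f ` K \<subseteq> {1}"
    by (rule Urysohn_lemma[OF nX assms(4) conjunct1[OF K] dj, of "0::real" 1]) simp
  have fX: "continuous_map X euclideanreal f" and frng: "\<And>x. x \<in> topspace X \<Longrightarrow> f x \<in> {0..1}"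
    using f(1) unfolding continuous_map_in_subtopology by auto
  have Omtop: "?Om \<subseteq> topspace X" by (auto simp: attr_region_def)
  have zc: "continuous_map (subtopology X ?Om) euclideanreal \<zeta>"
    and zn: "\<And>x. x \<in> ?Om \<Longrightarrow> 0 \<le> \<zeta> x \<and> (\<zeta> x = 0 \<longleftrightarrow> x \<in> A)"
    using assms(5) unfolding K0_function_def by auto
  define z' where "z' = (\<lambda>x. \<zeta> x + f x)"
  have K0': "K0_function X D Phi A z'"
    unfolding K0_function_def
  proof (intro conjI ballI)
    show "continuous_map (subtopology X ?Om) euclideanreal z'"
      unfolding z'_def using zc continuous_map_from_subtopology[OF fX]
      by (intro continuous_map_add) auto
  next
    fix x assume x: "x \<in> ?Om"
    have fx: "0 \<le> f x" using frng x Omtop by auto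
    show "0 \<le> z' x" using zn[OF x] fx unfolding z'_def by simp
    show "z' x = 0 \<longleftrightarrow> x \<in> A"
    proof
      assume "z' x = 0"
      then have "\<zeta> x = 0" using zn[OF x] fx unfolding z'_def by linarith
      then show "x \<in> A" using zn[OF x] by simp
    next
      assume xA: "x \<in> A"
      then have "f x = 0" using f(2) by auto
      then show "z' x = 0" using zn[OF x] xA unfolding z'_def by simp
    qed
  qed
  from gen_lyap[OF assms(2-4) K0'] have G: "Lyapunov_function X D Phi A (LyapL Phi z')"
    "\<forall>x\<in>?Om. z' x \<le> LyapL Phi z' x" by auto
  have "1 \<le> LyapL Phi z' x" if x: "x \<in> K" for x
  proof -
    have xO: "x \<in> ?Om" using x K by blast
    have "f x = 1" using f(3) x by auto
    then have "1 \<le> z' x" using zn[OF xO] unfolding z'_def by simp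
    then show ?thesis using G(2) xO by fastforce
  qed
  then show "\<exists>L. Lyapunov_function X D Phi A L \<and> (\<forall>x\<in>K. 1 \<le> L x)" using G(1) by blast
qed

end
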